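(* Let $K=2$ and consider the loss sequence $\ell_{t,1}=0$, $\ell_{t,2}=1$ for all $1\le t\le T$. For WSU-UX run with any valid $(\eta,\gamma)$ with $\eta<T^{-2/3}$, the regret satisfies $\mathbb{E}[\mathcal R_T]\ge \frac{1}{200}T^{2/3}$.
   Context: WSU-UX. Fix integers $K\ge 2$ (number of arms/experts) and $T\ge 1$ (horizon) and hyperparameters $\eta,\gamma$. The pair $(\eta,\gamma)$ is called valid if $\eta,\gamma\in(0,1/2)$ and $\eta K/\gamma\le 1/2$. Given a fixed (oblivious) loss sequence $\ell_t=(\ell_{t,1},\dots,\ell_{t,K})\in[0,1]^K$, $t=1,\dots,T$, WSU-UX sets $\pi_{1,i}=1/K$ for all $i$ and in each round $t$: forms $\tilde\pi_{t,i}=(1-\gamma)\pi_{t,i}+\gamma/K$; draws $I_t\in[K]$ with $\Pr(I_t=i\mid\mathcal F_{t-1})=\tilde\pi_{t,i}$; sets $\hat\ell_{t,i}=\ell_{t,i}\mathbf 1[I_t=i]/\tilde\pi_{t,i}$; and updates $\pi_{t+1,i}=\pi_{t,i}\bigl(1-\eta(\hat\ell_{t,i}-\sum_{j=1}^K\pi_{t,j}\hat\ell_{t,j})\bigr)$. Here $\mathcal F_t$ is the history (sigma-algebra generated by $I_1,\dots,I_t$). The regret is $\mathbb{E}[\mathcal R_T]=\mathbb{E}\bigl[\sum_{t=1}^T\sum_{j=1}^K\tilde\pi_{t,j}\ell_{t,j}\bigr]-\min_{i\in[K]}\sum_{t=1}^T\ell_{t,i}$. *)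

theory Defs
  imports "HOL-Analysis.Analysis" "HOL-Library.FuncSet"
begin

text \<open>Arms are indexed by 1..K, rounds by 1..T. A realised history of draws is a
function I with I t the arm drawn in round t. Losses: l t i.\<close>

definition wsu_valid :: "nat \<Rightarrow> real \<Rightarrow> real \<Rightarrow> bool" where
  "wsu_valid K eta gamma \<longleftrightarrow> 0 < eta \<and> eta < 1/2 \<and> 0 < gamma \<and> gamma < 1/2
     \<and> eta * real K / gamma \<le> 1/2"

definition wsu_mix :: "nat \<Rightarrow> real \<Rightarrow> (nat \<Rightarrow> real) \<Rightarrow> nat \<Rightarrow> real" where
  "wsu_mix K gamma p i = (1 - gamma) * p i + gamma / real K"

text \<open>wsu_pi K eta gamma l I n is the weight vector pi_(n+1) after rounds 1..n
with draws I 1, ..., I n.\<close>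
fun wsu_pi :: "nat \<Rightarrow> real \<Rightarrow> real \<Rightarrow> (nat \<Rightarrow> nat \<Rightarrow> real) \<Rightarrow> (nat \<Rightarrow> nat)
                \<Rightarrow> nat \<Rightarrow> nat \<Rightarrow> real" where
  "wsu_pi K eta gamma l I 0 = (\<lambda>i. 1 / real K)"
| "wsu_pi K eta gamma l I (Suc n) =
     (let p = wsu_pi K eta gamma l I n;
          pt = wsu_mix K gamma p;
          t = Suc n;
          lhat = (\<lambda>i. l t i * (if I t = i then 1 else 0) / pt i);
          avg = (\<Sum>j\<in>{1..K}. p j * lhat j)
      in (\<lambda>i. p i * (1 - eta * (lhat i - avg))))"

definition wsu_hist_prob :: "nat \<Rightarrow> real \<Rightarrow> real \<Rightarrow> (nat \<Rightarrow> nat \<Rightarrow> real) \<Rightarrow> nat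
                \<Rightarrow> (nat \<Rightarrow> nat) \<Rightarrow> real" where
  "wsu_hist_prob K eta gamma l T I =
     (\<Prod>t\<in>{1..T}. wsu_mix K gamma (wsu_pi K eta gamma l I (t - 1)) (I t))"

definition wsu_expected_regret :: "nat \<Rightarrow> nat \<Rightarrow> real \<Rightarrow> real \<Rightarrow> (nat \<Rightarrow> nat \<Rightarrow> real) \<Rightarrow> real" where
  "wsu_expected_regret K T eta gamma l =
     (\<Sum>I\<in>PiE {1..T} (\<lambda>_. {1..K}).
        wsu_hist_prob K eta gamma l T I *
        (\<Sum>t\<in>{1..T}. \<Sum>j\<in>{1..K}. wsu_mix K gamma (wsu_pi K eta gamma l I (t - 1)) j * l t j))
     - Min ((\<lambda>i. \<Sum>t\<in>{1..T}. l t i) ` {1..K})"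

end

theory Submission
  imports Defs
begin

locale wsu2 =
  fixes eta gamma :: real
  assumes valid: "wsu_valid 2 eta gamma"
begin

abbreviation "L \<equiv> (\<lambda>(t::nat) (i::nat). if i = 1 then 0 else (1::real))"
abbreviation "pw n I \<equiv> wsu_pi 2 eta gamma L I n"
abbreviation "q n I \<equiv> pw n I 2"
abbreviation "P n I \<equiv> wsu_hist_prob 2 eta gamma L n I"

definition E :: "nat \<Rightarrow> ((nat \<Rightarrow> nat) \<Rightarrow> real) \<Rightarrow> real" where
  "E n f = (\<Sum>I\<in>PiE {1..n} (\<lambda>_. {1..2}). P n I * f I)"

lemma pars: "0 < eta" "0 < gamma" "gamma < 1/2" "eta < 1/2" "4 * eta \<le> gamma"
  using valid unfolding wsu_valid_def by (auto simp: field_simps)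

lemma prefix: "(\<forall>t\<in>{1..n}. I t = J t) \<Longrightarrow> wsu_pi K e g l I n = wsu_pi K e g l J n"
proof (induction n)
  case 0 then show ?case by simp
next
  case (Suc n)
  then have "wsu_pi K e g l I n = wsu_pi K e g l J n" by auto
  moreover have "I (Suc n) = J (Suc n)" using Suc.prems by auto
  ultimately show ?case by (simp add: Let_def)
qed

lemma two: "{1..2::nat} = {1,2}" by auto
lemma sum12: "(\<Sum>j\<in>{1..2::nat}. f j) = f 1 + f 2" unfolding two by simp

lemma step_eqs:
  "pw (Suc n) I 1 = pw n I 1 * (1 + eta * (q n I * (if I (Suc n) = 2 then 1 / wsu_mix 2 gamma (pw n I) 2 else 0)))"
  "q (Suc n) I = q n I * (1 - eta * ((1 - q n I) * (if I (Suc n) = 2 then 1 / wsu_mix 2 gamma (pw n I) 2 else 0)))"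
  by (simp only: wsu_pi.simps Let_def sum12; auto simp: algebra_simps)+

lemma inv: "pw n I 1 = 1 - q n I \<and> 0 \<le> q n I \<and> q n I \<le> 1"
proof (induction n)
  case 0 then show ?case by simp
next
  case (Suc n)
  let ?m = "wsu_mix 2 gamma (pw n I) 2"
  have m: "?m = (1-gamma) * q n I + gamma/2" by (simp add: wsu_mix_def)
  have mpos: "?m \<ge> gamma/2" using m Suc pars by (simp add: mult_nonneg_nonneg)
  have g: "gamma/2 > 0" using pars by simp
  define h where "h = (if I (Suc n) = 2 then 1 / ?m else 0)"
  have h0: "0 \<le> h" and h1: "h \<le> 2/gamma" unfolding h_def using mpos g
    by (auto simp: field_simps)
  have "eta * ((1 - q n I) * h) \<le> eta * (1 * (2/gamma))"
    using h0 h1 Suc pars by (intro mult_left_mono mult_mono) auto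
  also have "\<dots> \<le> 1/2" using pars by (simp add: field_simps)
  finally have b: "eta * ((1 - q n I) * h) \<le> 1/2" .
  have b0: "0 \<le> eta * ((1 - q n I) * h)" using h0 Suc pars by simp
  have e1: "pw (Suc n) I 1 = pw n I 1 * (1 + eta * (q n I * h))" using step_eqs(1) h_def by simp
  have e2: "q (Suc n) I = q n I * (1 - eta * ((1 - q n I) * h))" using step_eqs(2) h_def by simp
  show ?case
  proof (intro conjI)
    have a: "pw n I 1 = 1 - q n I" using Suc.IH by simp
    show "pw (Suc n) I 1 = 1 - q (Suc n) I" unfolding e1 e2 a by (simp add: algebra_simps)
    show "0 \<le> q (Suc n) I" unfolding e2 using Suc b by simp
    show "q (Suc n) I \<le> 1" unfolding e2 using Suc b b0
      by (smt (verit) mult_left_le)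
  qed
qed

lemma P_prefix: "(\<forall>t\<in>{1..n}. I t = J t) \<Longrightarrow> P n I = P n J"
  unfolding wsu_hist_prob_def
proof (intro prod.cong refl)
  fix t assume H: "\<forall>t\<in>{1..n}. I t = J t" and t: "t \<in> {1..n}"
  have "pw (t-1) I = pw (t-1) J" using H t by (intro prefix) auto
  then show "wsu_mix 2 gamma (pw (t - 1) I) (I t) = wsu_mix 2 gamma (pw (t - 1) J) (J t)"
    using H t by simp
qed

lemma P_Suc: "P (Suc n) I = wsu_mix 2 gamma (pw n I) (I (Suc n)) * P n I"
proof -
  have "{1..Suc n} = insert (Suc n) {1..n}" by auto
  then show ?thesis unfolding wsu_hist_prob_def by simp
qed

lemma E_Suc: "E (Suc n) f = E n (\<lambda>g. \<Sum>x\<in>{1..2}. wsu_mix 2 gamma (pw n g) x * f (g(Suc n := x)))"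
proof -
  have ins: "{1..Suc n} = insert (Suc n) {1..n}" by auto
  have nin: "Suc n \<notin> {1..n}" by simp
  have "E (Suc n) f = (\<Sum>I\<in>(\<lambda>(y, g). g(Suc n := y)) ` ({1..2} \<times> PiE {1..n} (\<lambda>_. {1..2::nat})). P (Suc n) I * f I)"
    unfolding E_def ins PiE_insert_eq by simp
  also have "\<dots> = (\<Sum>(y,g)\<in>{1..2} \<times> PiE {1..n} (\<lambda>_. {1..2::nat}). P (Suc n) (g(Suc n := y)) * f (g(Suc n := y)))"
    by (subst sum.reindex) (use inj_combinator[OF nin, of "\<lambda>_. {1..2::nat}"] in \<open>auto simp: case_prod_unfold\<close>)
  also have "\<dots> = (\<Sum>(y,g)\<in>{1..2} \<times> PiE {1..n} (\<lambda>_. {1..2::nat}). wsu_mix 2 gamma (pw n g) y * P n g * f (g(Suc n := y)))"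
  proof (intro sum.cong refl, clarify)
    fix y :: nat and g :: "nat \<Rightarrow> nat"
    have a: "\<forall>t\<in>{1..n}. (g(Suc n := y)) t = g t" by simp
    show "P (Suc n) (g(Suc n := y)) * f (g(Suc n := y)) = wsu_mix 2 gamma (pw n g) y * P n g * f (g(Suc n := y))"
      unfolding P_Suc P_prefix[OF a] prefix[OF a] by simp
  qed
  also have "\<dots> = (\<Sum>g\<in>PiE {1..n} (\<lambda>_. {1..2::nat}). \<Sum>y\<in>{1..2}. wsu_mix 2 gamma (pw n g) y * P n g * f (g(Suc n := y)))"
    by (subst sum.cartesian_product[symmetric]) (rule sum.swap)
  also have "\<dots> = E n (\<lambda>g. \<Sum>x\<in>{1..2}. wsu_mix 2 gamma (pw n g) x * f (g(Suc n := x)))"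
    unfolding E_def by (simp add: sum_distrib_left mult_ac)
  finally show ?thesis .
qed

lemma mix_nonneg: "x \<in> {1..2} \<Longrightarrow> 0 \<le> wsu_mix 2 gamma (pw n I) x"
proof -
  assume x: "x \<in> {1..2}"
  have i: "pw n I 1 = 1 - q n I" "0 \<le> q n I" "q n I \<le> 1" using inv by auto
  have "x = 1 \<or> x = 2" using x by auto
  then show ?thesis using i pars unfolding wsu_mix_def by (auto intro!: add_nonneg_nonneg mult_nonneg_nonneg)
qed

lemma mix_sum: "(\<Sum>x\<in>{1..2}. wsu_mix 2 gamma (pw n I) x) = 1"
proof -
  have i: "pw n I 1 = 1 - q n I" using inv by auto
  show ?thesis unfolding sum12 wsu_mix_def i by (simp add: algebra_simps)
qed

lemma P_nonneg: "I \<in> PiE {1..n} (\<lambda>_. {1..2}) \<Longrightarrow> 0 \<le> P n I"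
  unfolding wsu_hist_prob_def by (intro prod_nonneg ballI mix_nonneg) (auto simp: PiE_def)

lemma E_mono: "(\<And>I. I \<in> PiE {1..n} (\<lambda>_. {1..2}) \<Longrightarrow> f I \<le> g I) \<Longrightarrow> E n f \<le> E n g"
  unfolding E_def by (intro sum_mono mult_left_mono P_nonneg) auto

lemma E_cmult: "E n (\<lambda>I. c * f I) = c * E n f"
  unfolding E_def by (simp add: sum_distrib_left mult_ac)

lemma E_cong: "(\<And>I. I \<in> PiE {1..n} (\<lambda>_. {1..2}) \<Longrightarrow> f I = g I) \<Longrightarrow> E n f = E n g"
  unfolding E_def by (intro sum.cong) auto

lemma tower:
  fixes m n :: nat and f :: "(nat \<Rightarrow> nat) \<Rightarrow> real"
  shows "m \<le> n \<Longrightarrow> (\<And>I J. (\<forall>t\<in>{1..m}. I t = J t) \<Longrightarrow> f I = f J) \<Longrightarrow> E n f = E m f"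
proof (induction n)
  case 0 then show ?case by simp
next
  case (Suc n)
  show ?case
  proof (cases "m = Suc n")
    case True then show ?thesis by simp
  next
    case False
    then have mn: "m \<le> n" using Suc by simp
    have "E (Suc n) f = E n (\<lambda>g. \<Sum>x\<in>{1..2}. wsu_mix 2 gamma (pw n g) x * f (g(Suc n := x)))"
      by (rule E_Suc)
    also have "\<dots> = E n f"
    proof (rule E_cong)
      fix g :: "nat \<Rightarrow> nat"
      have "\<And>x. f (g(Suc n := x)) = f g" using mn by (intro Suc.prems(2)) auto
      then show "(\<Sum>x\<in>{1..2}. wsu_mix 2 gamma (pw n g) x * f (g(Suc n := x))) = f g"
        using mix_sum[where n=n and I=g] by (simp add: sum_distrib_right[symmetric])
    qed
    also have "\<dots> = E m f" using Suc.IH[OF mn Suc.prems(2)] .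
    finally show ?thesis .
  qed
qed

lemma one_step: "(\<Sum>x\<in>{1..2}. wsu_mix 2 gamma (pw n g) x * q (Suc n) (g(Suc n := x))) \<ge> (1 - eta) * q n g"
proof -
  have a: "\<forall>t\<in>{1..n}. (g(Suc n := x)) t = g t" for x by simp
  have pp: "pw n (g(Suc n := x)) = pw n g" for x using prefix[OF a] .
  have i: "pw n g 1 = 1 - q n g" "0 \<le> q n g" "q n g \<le> 1" using inv by auto
  let ?m = "wsu_mix 2 gamma (pw n g) 2"
  have m: "?m = (1-gamma) * q n g + gamma/2" by (simp add: wsu_mix_def)
  have "(1-gamma) * q n g \<ge> 0" using i pars by (intro mult_nonneg_nonneg) auto
  then have mpos: "?m > 0" using m pars by linarith
  have m1: "wsu_mix 2 gamma (pw n g) 1 = 1 - ?m" unfolding wsu_mix_def i by (simp add: algebra_simps)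
  have q1: "q (Suc n) (g(Suc n := 1)) = q n g" unfolding step_eqs(2) pp by simp
  have q2: "q (Suc n) (g(Suc n := 2)) = q n g * (1 - eta * ((1 - q n g) * (1 / ?m)))" unfolding step_eqs(2) pp by simp
  have "(\<Sum>x\<in>{1..2}. wsu_mix 2 gamma (pw n g) x * q (Suc n) (g(Suc n := x)))
      = (1 - ?m) * q n g + ?m * (q n g * (1 - eta * ((1 - q n g) * (1 / ?m))))"
    unfolding sum12 m1 q1 q2 by simp
  also have "\<dots> = q n g - eta * q n g * (1 - q n g)" using mpos by (simp add: field_simps)
  also have "\<dots> \<ge> (1 - eta) * q n g"
  proof -
    have "q n g - eta * q n g * (1 - q n g) - (1 - eta) * q n g = eta * (q n g * q n g)"
      by (simp add: algebra_simps)
    moreover have "eta * (q n g * q n g) \<ge> 0" using pars by simp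
    ultimately show ?thesis by linarith
  qed
  finally show ?thesis .
qed

lemma E_q: "E m (q m) \<ge> (1 - eta) ^ m / 2"
proof (induction m)
  case 0
  have "PiE {1..0::nat} (\<lambda>_. {1..2::nat}) = {\<lambda>_. undefined}" by simp
  then show ?case unfolding E_def wsu_hist_prob_def by simp
next
  case (Suc m)
  have "E (Suc m) (q (Suc m)) = E m (\<lambda>g. \<Sum>x\<in>{1..2}. wsu_mix 2 gamma (pw m g) x * q (Suc m) (g(Suc m := x)))"
    by (rule E_Suc)
  also have "\<dots> \<ge> E m (\<lambda>g. (1 - eta) * q m g)" by (intro E_mono one_step)
  finally have "E (Suc m) (q (Suc m)) \<ge> (1 - eta) * E m (q m)" unfolding E_cmult .
  moreover have "(1 - eta) * E m (q m) \<ge> (1 - eta) * ((1 - eta) ^ m / 2)"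
    using Suc.IH pars by (intro mult_left_mono) auto
  ultimately show ?case by simp
qed

lemma E_sum: "E n (\<lambda>I. \<Sum>t\<in>A. f t I) = (\<Sum>t\<in>A. E n (f t))"
  unfolding E_def by (simp add: sum_distrib_left sum.swap[of _ A])

lemma E_term: "t \<in> {1..T} \<Longrightarrow> E T (\<lambda>I. wsu_mix 2 gamma (pw (t-1) I) 2) \<ge> (1 - gamma) * ((1 - eta) ^ (t-1) / 2)"
proof -
  assume t: "t \<in> {1..T}"
  have "E T (\<lambda>I. wsu_mix 2 gamma (pw (t-1) I) 2) \<ge> E T (\<lambda>I. (1 - gamma) * q (t-1) I)"
    using pars by (intro E_mono) (simp add: wsu_mix_def)
  also have "E T (\<lambda>I. (1 - gamma) * q (t-1) I) = (1 - gamma) * E T (q (t-1))" by (rule E_cmult)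
  also have "E T (q (t-1)) = E (t-1) (q (t-1))"
  proof (rule tower)
    show "t - 1 \<le> T" using t by auto
    fix I J :: "nat \<Rightarrow> nat" assume "\<forall>t'\<in>{1..t-1}. I t' = J t'"
    then show "q (t-1) I = q (t-1) J" using prefix by metis
  qed
  finally have a: "(1 - gamma) * E (t - 1) (q (t - 1)) \<le> E T (\<lambda>I. wsu_mix 2 gamma (pw (t - 1) I) 2)" .
  have "(1 - gamma) * ((1 - eta) ^ (t-1) / 2) \<le> (1 - gamma) * E (t - 1) (q (t - 1))"
    using E_q[of "t-1"] pars by (intro mult_left_mono) auto
  with a show ?thesis by linarith
qed

end

lemma arith_bound:
  fixes T :: nat and eta :: real
  assumes T: "T \<ge> 1" and e0: "0 < eta" and e1: "eta < 1/2" and et: "eta < real T powr (-2/3)"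
  shows "(\<Sum>t<T. (1 - eta) ^ t) \<ge> real T powr (2/3) / 2"
proof -
  have Tp: "real T > 0" using T by simp
  have gs: "(\<Sum>t<T. (1 - eta) ^ t) = (1 - (1 - eta) ^ T) / eta"
    using geometric_sum[of "1 - eta" T] e0 by (simp add: field_simps)
  have b1: "(1 + eta) ^ T \<ge> 1 + real T * eta" using Bernoulli_inequality[of eta T] e0 by simp
  have "(1 - eta) ^ T * (1 + eta) ^ T = (1 - eta^2) ^ T" by (simp add: power_mult_distrib[symmetric] algebra_simps power2_eq_square)
  also have "\<dots> \<le> 1" using e0 e1 by (intro power_le_one) (auto simp: power2_eq_square mult_le_one)
  finally have c: "(1 - eta) ^ T * (1 + eta) ^ T \<le> 1" .
  have pos: "(1 - eta) ^ T \<ge> 0" using e1 by simp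
  have "(1 - eta) ^ T * (1 + real T * eta) \<le> (1 - eta) ^ T * (1 + eta) ^ T"
    using b1 pos by (rule mult_left_mono)
  with c have d: "(1 - eta) ^ T * (1 + real T * eta) \<le> 1" by linarith
  have den: "1 + real T * eta > 0" using e0 by (simp add: add_pos_nonneg)
  have "(1 - eta) ^ T \<le> 1 / (1 + real T * eta)" using d den by (simp add: field_simps)
  then have "(1 - (1 - eta) ^ T) / eta \<ge> (1 - 1 / (1 + real T * eta)) / eta"
    using e0 by (intro divide_right_mono) auto
  also have "(1 - 1 / (1 + real T * eta)) / eta = real T / (1 + real T * eta)"
  proof -
    have "1 - 1 / (1 + real T * eta) = real T * eta / (1 + real T * eta)" using den by (simp add: field_simps)
    moreover have "real T * eta / (1 + real T * eta) / eta = real T / (1 + real T * eta)"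
      unfolding divide_divide_eq_left using e0 by (intro nonzero_mult_divide_mult_cancel_right) simp
    ultimately show ?thesis by simp
  qed
  finally have s: "(\<Sum>t<T. (1 - eta) ^ t) \<ge> real T / (1 + real T * eta)" using gs by simp
  let ?a = "real T powr (2/3)"
  have a1: "?a \<le> real T" using powr_mono[of "2/3" 1 "real T"] T by simp
  have "real T powr (-2/3) * ?a = 1" using Tp by (simp add: powr_add[symmetric])
  moreover have "eta * ?a < real T powr (-2/3) * ?a" using et Tp by (intro mult_strict_right_mono) auto
  ultimately have "eta * ?a < 1" by simp
  then have "real T * (eta * ?a) < real T * 1" using Tp by (intro mult_strict_left_mono) auto
  then have a2: "real T * eta * ?a < real T" by (simp add: mult.assoc)
  have "?a / 2 \<le> real T / (1 + real T * eta)"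
    using den a1 a2 by (simp add: field_simps)
  with s show ?thesis by linarith
qed

lemma shift_sum: "(\<Sum>t\<in>{1..T}. h (t - 1)) = (\<Sum>t<T. (h (t::nat)::real))"
  by (induction T) (auto simp: atLeastAtMostSuc_conv)

theorem mainTheorem2:
  fixes T :: nat and eta gamma :: real
  assumes "T \<ge> 1"
    and "wsu_valid 2 eta gamma"
    and "eta < real T powr (-2/3)"
  shows "wsu_expected_regret 2 T eta gamma (\<lambda>t i. if i = 1 then 0 else 1)
           \<ge> (1/200) * real T powr (2/3)"
proof -
  interpret W: wsu2 eta gamma using assms(2) by unfold_locales
  let ?L = "(\<lambda>(t::nat) (i::nat). if i = 1 then 0 else (1::real))"
  have img: "(\<lambda>i. \<Sum>t\<in>{1..T}. ?L t i) ` {1..2} = {0, real T}"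
    unfolding W.two by auto
  have mn: "Min ((\<lambda>i. \<Sum>t\<in>{1..T}. ?L t i) ` {1..2}) = 0" unfolding img by simp
  have inner: "(\<Sum>j\<in>{1..2}. wsu_mix 2 gamma (wsu_pi 2 eta gamma ?L I (t - 1)) j * ?L t j)
      = wsu_mix 2 gamma (wsu_pi 2 eta gamma ?L I (t - 1)) 2" for I t
    unfolding W.sum12 by simp
  have R: "wsu_expected_regret 2 T eta gamma ?L = W.E T (\<lambda>I. \<Sum>t\<in>{1..T}. wsu_mix 2 gamma (wsu_pi 2 eta gamma ?L I (t - 1)) 2)"
    unfolding wsu_expected_regret_def mn inner W.E_def by simp
  have "W.E T (\<lambda>I. \<Sum>t\<in>{1..T}. wsu_mix 2 gamma (wsu_pi 2 eta gamma ?L I (t - 1)) 2)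
      = (\<Sum>t\<in>{1..T}. W.E T (\<lambda>I. wsu_mix 2 gamma (wsu_pi 2 eta gamma ?L I (t - 1)) 2))"
    by (rule W.E_sum)
  also have "\<dots> \<ge> (\<Sum>t\<in>{1..T}. (1 - gamma) * ((1 - eta) ^ (t-1) / 2))"
    by (intro sum_mono W.E_term)
  finally have r1: "wsu_expected_regret 2 T eta gamma ?L \<ge> (\<Sum>t\<in>{1..T}. (1 - gamma) * ((1 - eta) ^ (t-1) / 2))"
    unfolding R .
  have "(\<Sum>t\<in>{1..T}. (1 - gamma) * ((1 - eta) ^ (t-1) / 2)) = (1 - gamma) / 2 * (\<Sum>t<T. (1 - eta) ^ t)"
    by (subst shift_sum[where h = "\<lambda>t. (1 - gamma) * ((1 - eta) ^ t / 2)"]) (simp add: sum_distrib_left)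
  also have "\<dots> \<ge> (1/4) * (real T powr (2/3) / 2)"
  proof (rule mult_mono)
    show "1/4 \<le> (1 - gamma) / 2" using W.pars by simp
    show "real T powr (2 / 3) / 2 \<le> (\<Sum>t<T. (1 - eta) ^ t)"
      using arith_bound[OF assms(1)] W.pars assms(3) by simp
    show "0 \<le> (1 - gamma) / 2" using W.pars by simp
    show "0 \<le> real T powr (2 / 3) / 2" by simp
  qed
  finally have r2: "(1/4) * (real T powr (2/3) / 2) \<le> (\<Sum>t\<in>{1..T}. (1 - gamma) * ((1 - eta) ^ (t-1) / 2))" .
  have "(1/200) * real T powr (2/3) \<le> (1/4) * (real T powr (2/3) / 2)" by simp
  then show ?thesis using r1 r2 by linarith
qed

end
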